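(* Assume $\lambda<1-\frac1d$. Let $x$ be a fluid solution such that $x_{0,0}(t)>0$ for all $t\ge0$. Then there exist $\alpha>0$ and $\beta>0$ such that $\|x(t)-x^\star\|\le\alpha e^{-\beta t}$ for all $t\ge0$, where $x^\star$ is given by $x^\star_{0,0}=1-\lambda-\frac1d$, $x^\star_{0,1}=\frac1d$, $x^\star_{1,1}=\lambda$ and $x^\star_{i,j}=0$ otherwise, and $\|\cdot\|$ is the Euclidean norm.
   Context: Fix $\lambda\in(0,1)$, an integer $d\ge2$ and an integer $I>1$. $\mathcal S=\{x=(x_{i,j})_{0\le i\le j\le I}: x_{i,j}\ge0,\ \sum_{i=0}^I\sum_{j=i}^I x_{i,j}=1\}$; $x_{i,\cdot}=\sum_{j=i}^I x_{i,j}$, $x_{\cdot,j}=\sum_{i=0}^j x_{i,j}$. For $0\le j\le I$: $\mathcal R_j(x)=\max\{0,\lambda(1-d\sum_{i=0}^j(j+1-i)x_{i,\cdot})\}\,\mathbf 1\{\sum_{i=0}^j x_{\cdot,i}=0\}$, $\mathcal G_j(x)=\lambda d\,\mathbf 1\{\sum_{i=0}^j x_{\cdot,i}=0,\ d\sum_{i=0}^j(j+1-i)x_{i,\cdot}\le1\}\sum_{i=0}^j x_{i,\cdot}$. Write $\rho_k^{a,b}(x)=\mathcal R_k(x)\frac{x_{a,b}}{x_{\cdot,b}}\mathbf 1\{x_{\cdot,b}>0\}$ (equal to $0$ when $x_{\cdot,b}=0$). The drift $b(x)$ is: $b_{0,0}=\lambda d(x_{0,\cdot}-x_{0,0})-\lambda+\mathcal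 R_0(x)$; for $i<j$: $b_{i,j}=x_{i+1,j}-\mathbf 1\{i>0\}x_{i,j}-\lambda d x_{i,j}-\rho_{j-1}^{i,j}+\mathbf 1\{i>0\}\rho_{j-2}^{i-1,j-1}+\mathbf 1\{j=I,i>0\}\rho_{I-1}^{i-1,I}$; $b_{1,1}=-x_{1,1}+\lambda d(x_{1,\cdot}-x_{1,1})+\lambda-\mathcal R_0(x)-\rho_0^{1,1}-\mathcal G_1(x)$; for $2\le i\le I-1$: $b_{i,i}=-x_{i,i}+\lambda d(x_{i,\cdot}-x_{i,i})-\rho_{i-1}^{i,i}+\rho_{i-2}^{i-1,i-1}+\mathcal G_{i-1}(x)-\mathcal G_i(x)$; $b_{I,I}=-x_{I,I}+\rho_{I-2}^{I-1,I-1}+\mathcal G_{I-1}(x)+\rho_{I-1}^{I-1,I}$. A fluid solution is an absolutely continuous $x:\mathbb R_+\to\mathcal S$ with $\dot x_{i,j}(t)=b_{i,j}(x(t))$ for a.e. $t$ and all $i\le j$. *)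

theory Defs
  imports "HOL-Analysis.Analysis"
begin

text \<open>States: x :: nat \<Rightarrow> nat \<Rightarrow> real, only the entries x i j with i \<le> j \<le> I matter.\<close>

definition in_S :: "nat \<Rightarrow> (nat \<Rightarrow> nat \<Rightarrow> real) \<Rightarrow> bool" where
  "in_S I x \<longleftrightarrow> (\<forall>j\<le>I. \<forall>i\<le>j. x i j \<ge> 0) \<and> (\<Sum>i\<le>I. \<Sum>j=i..I. x i j) = 1"

definition xrow :: "nat \<Rightarrow> (nat \<Rightarrow> nat \<Rightarrow> real) \<Rightarrow> nat \<Rightarrow> real" where
  "xrow I x i = (\<Sum>j=i..I. x i j)"

definition xcol :: "(nat \<Rightarrow> nat \<Rightarrow> real) \<Rightarrow> nat \<Rightarrow> real" where
  "xcol x j = (\<Sum>i\<le>j. x i j)"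

definition RR :: "real \<Rightarrow> nat \<Rightarrow> nat \<Rightarrow> (nat \<Rightarrow> nat \<Rightarrow> real) \<Rightarrow> nat \<Rightarrow> real" where
  "RR lam d I x j =
     (if (\<Sum>i\<le>j. xcol x i) = 0
      then max 0 (lam * (1 - real d * (\<Sum>i\<le>j. real (j + 1 - i) * xrow I x i)))
      else 0)"

definition GG :: "real \<Rightarrow> nat \<Rightarrow> nat \<Rightarrow> (nat \<Rightarrow> nat \<Rightarrow> real) \<Rightarrow> nat \<Rightarrow> real" where
  "GG lam d I x j =
     (if (\<Sum>i\<le>j. xcol x i) = 0 \<and> real d * (\<Sum>i\<le>j. real (j + 1 - i) * xrow I x i) \<le> 1
      then lam * real d * (\<Sum>i\<le>j. xrow I x i)
      else 0)"

definition rho :: "real \<Rightarrow> nat \<Rightarrow> nat \<Rightarrow> (nat \<Rightarrow> nat \<Rightarrow> real) \<Rightarrow> nat \<Rightarrow> nat \<Rightarrow> nat \<Rightarrow> real" where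
  "rho lam d I x k a b = (if xcol x b > 0 then RR lam d I x k * x a b / xcol x b else 0)"

definition drift :: "real \<Rightarrow> nat \<Rightarrow> nat \<Rightarrow> (nat \<Rightarrow> nat \<Rightarrow> real) \<Rightarrow> nat \<Rightarrow> nat \<Rightarrow> real" where
  "drift lam d I x i j =
    (if i = 0 \<and> j = 0 then
       lam * real d * (xrow I x 0 - x 0 0) - lam + RR lam d I x 0
     else if i < j then
       x (i+1) j - (if i > 0 then x i j else 0) - lam * real d * x i j
       - rho lam d I x (j-1) i j
       + (if i > 0 then rho lam d I x (j-2) (i-1) (j-1) else 0)
       + (if j = I \<and> i > 0 then rho lam d I x (I-1) (i-1) I else 0)
     else if i = 1 \<and> j = 1 then
       - x 1 1 + lam * real d * (xrow I x 1 - x 1 1) + lam - RR lam d I x 0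
       - rho lam d I x 0 1 1 - GG lam d I x 1
     else if i = j \<and> 2 \<le> i \<and> i \<le> I - 1 then
       - x i i + lam * real d * (xrow I x i - x i i) - rho lam d I x (i-1) i i
       + rho lam d I x (i-2) (i-1) (i-1) + GG lam d I x (i-1) - GG lam d I x i
     else if i = I \<and> j = I then
       - x I I + rho lam d I x (I-2) (I-1) (I-1) + GG lam d I x (I-1)
       + rho lam d I x (I-1) (I-1) I
     else 0)"

definition abs_cont_on :: "real set \<Rightarrow> (real \<Rightarrow> real) \<Rightarrow> bool" where
  "abs_cont_on S f \<longleftrightarrow>
     (\<forall>e>0. \<exists>\<delta>>0. \<forall>(n::nat) (a::nat\<Rightarrow>real) (b::nat\<Rightarrow>real).
        (\<forall>k<n. a k \<le> b k \<and> {a k..b k} \<subseteq> S) \<and>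
        (\<forall>k<n. \<forall>l<n. k \<noteq> l \<longrightarrow> {a k<..<b k} \<inter> {a l<..<b l} = {}) \<and>
        (\<Sum>k<n. b k - a k) < \<delta>
        \<longrightarrow> (\<Sum>k<n. \<bar>f (b k) - f (a k)\<bar>) < e)"

text \<open>Absolutely continuous on R_+ : absolutely continuous on every compact [0,T].\<close>
definition fluid_solution :: "real \<Rightarrow> nat \<Rightarrow> nat \<Rightarrow> (real \<Rightarrow> nat \<Rightarrow> nat \<Rightarrow> real) \<Rightarrow> bool" where
  "fluid_solution lam d I x \<longleftrightarrow>
     (\<forall>t\<ge>0. in_S I (x t)) \<and>
     (\<forall>j\<le>I. \<forall>i\<le>j. \<forall>T\<ge>0. abs_cont_on {0..T} (\<lambda>t. x t i j)) \<and>
     (AE t in lborel. t > 0 \<longrightarrow>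
        (\<forall>j\<le>I. \<forall>i\<le>j. ((\<lambda>s. x s i j) has_real_derivative drift lam d I (x t) i j) (at t)))"

definition xstar :: "real \<Rightarrow> nat \<Rightarrow> nat \<Rightarrow> nat \<Rightarrow> real" where
  "xstar lam d i j =
     (if i = 0 \<and> j = 0 then 1 - lam - 1 / real d
      else if i = 0 \<and> j = 1 then 1 / real d
      else if i = 1 \<and> j = 1 then lam
      else 0)"

definition state_dist :: "nat \<Rightarrow> (nat \<Rightarrow> nat \<Rightarrow> real) \<Rightarrow> (nat \<Rightarrow> nat \<Rightarrow> real) \<Rightarrow> real" where
  "state_dist I x y = sqrt (\<Sum>j\<le>I. \<Sum>i\<le>j. (x i j - y i j)\<^sup>2)"

end

theory Submission
  imports Defs
begin


lemma ac_cont: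
  assumes ac: "abs_cont_on {a..b} g"
  shows "continuous_on {a..b} g"
  unfolding continuous_on_iff
proof (intro ballI allI impI)
  fix x e :: real assume x: "x \<in> {a..b}" and e: "0 < e"
  obtain d where d: "d > 0" and H: "\<forall>(n::nat) (a'::nat\<Rightarrow>real) (b'::nat\<Rightarrow>real).
        (\<forall>k<n. a' k \<le> b' k \<and> {a' k..b' k} \<subseteq> {a..b}) \<and>
        (\<forall>k<n. \<forall>l<n. k \<noteq> l \<longrightarrow> {a' k<..<b' k} \<inter> {a' l<..<b' l} = {}) \<and>
        (\<Sum>k<n. b' k - a' k) < d
        \<longrightarrow> (\<Sum>k<n. \<bar>g (b' k) - g (a' k)\<bar>) < e"
    using ac e unfolding abs_cont_on_def by blast
  show "\<exists>d>0. \<forall>x'\<in>{a..b}. dist x' x < d \<longrightarrow> dist (g x') (g x) < e"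
  proof (intro exI[of _ d] conjI ballI impI)
    fix y assume y: "y \<in> {a..b}" "dist y x < d"
    have p1: "\<forall>k<(1::nat). (\<lambda>_. min x y) k \<le> (\<lambda>_. max x y) k \<and> {(\<lambda>_. min x y) k..(\<lambda>_. max x y) k} \<subseteq> {a..b}"
      using x y by auto
    have p2: "\<forall>k<(1::nat). \<forall>l<1. k \<noteq> l \<longrightarrow> {(\<lambda>_. min x y) k<..<(\<lambda>_. max x y) k} \<inter> {(\<lambda>_. min x y) l<..<(\<lambda>_. max x y) l} = {}"
      by auto
    have p3: "(\<Sum>k<(1::nat). (\<lambda>_. max x y) k - (\<lambda>_. min x y) k) < d"
      using y by (auto simp: dist_real_def max_def min_def card_lessThan)
    have "(\<Sum>k<(1::nat). \<bar>g ((\<lambda>_. max x y) k) - g ((\<lambda>_. min x y) k)\<bar>) < e"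
      by (rule H[THEN spec[of _ 1], THEN spec[of _ "\<lambda>_. min x y"], THEN spec[of _ "\<lambda>_. max x y"], THEN mp, OF conjI[OF p1 conjI[OF p2 p3]]])
    moreover have "\<bar>g (max x y) - g (min x y)\<bar> = \<bar>g y - g x\<bar>"
      by (cases "x \<le> y") (simp_all add: max_def min_def abs_minus_commute)
    ultimately show "dist (g y) (g x) < e"
      by (simp add: dist_real_def)
  qed (use d in auto)
qed

lemma ac_lip:
  assumes L: "\<And>s t. s \<in> S \<Longrightarrow> t \<in> S \<Longrightarrow> \<bar>f s - f t\<bar> \<le> L * \<bar>s - t\<bar>"
  shows "abs_cont_on S f"
  unfolding abs_cont_on_def
proof (intro allI impI)
  fix e :: real assume e: "0 < e"
  define d where "d = e / (\<bar>L\<bar> + 1)"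
  have d: "d > 0" using e by (simp add: d_def)
  show "\<exists>\<delta>>0. \<forall>(n::nat) a b.
        (\<forall>k<n. a k \<le> b k \<and> {a k..b k} \<subseteq> S) \<and>
        (\<forall>k<n. \<forall>l<n. k \<noteq> l \<longrightarrow> {a k<..<b k} \<inter> {a l<..<b l} = {}) \<and>
        (\<Sum>k<n. b k - a k) < \<delta> \<longrightarrow> (\<Sum>k<n. \<bar>f (b k) - f (a k)\<bar>) < e"
  proof (intro exI[of _ d] conjI allI impI d)
    fix n :: nat and a b :: "nat \<Rightarrow> real"
    assume H: "(\<forall>k<n. a k \<le> b k \<and> {a k..b k} \<subseteq> S) \<and>
        (\<forall>k<n. \<forall>l<n. k \<noteq> l \<longrightarrow> {a k<..<b k} \<inter> {a l<..<b l} = {}) \<and>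
        (\<Sum>k<n. b k - a k) < d"
    have "(\<Sum>k<n. \<bar>f (b k) - f (a k)\<bar>) \<le> (\<Sum>k<n. (\<bar>L\<bar>+1) * (b k - a k))"
    proof (rule sum_mono)
      fix k assume "k \<in> {..<n}"
      then have k0: "a k \<le> b k" "{a k..b k} \<subseteq> S" using H by auto
      then have k: "a k \<le> b k" "a k \<in> S" "b k \<in> S" by auto
      have "\<bar>f (b k) - f (a k)\<bar> \<le> L * \<bar>b k - a k\<bar>" using L k by blast
      also have "\<dots> \<le> (\<bar>L\<bar>+1) * (b k - a k)" using k
        by (intro mult_mono) auto
      finally show "\<bar>f (b k) - f (a k)\<bar> \<le> (\<bar>L\<bar>+1) * (b k - a k)" .
    qed
    also have "\<dots> = (\<bar>L\<bar>+1) * (\<Sum>k<n. b k - a k)" by (simp add: sum_distrib_left)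
    also have "\<dots> < (\<bar>L\<bar>+1) * d" using H by (intro mult_strict_left_mono) auto
    also have "\<dots> = e" unfolding d_def by simp
    finally show "(\<Sum>k<n. \<bar>f (b k) - f (a k)\<bar>) < e" .
  qed
qed

lemma ac_add:
  assumes f: "abs_cont_on S f" and g: "abs_cont_on S g"
  shows "abs_cont_on S (\<lambda>t. f t + g t)"
  unfolding abs_cont_on_def
proof (intro allI impI)
  fix e :: real assume e: "0 < e"
  obtain d1 where d1: "d1 > 0" and H1: "\<forall>(n::nat) (a::nat\<Rightarrow>real) (b::nat\<Rightarrow>real).
        (\<forall>k<n. a k \<le> b k \<and> {a k..b k} \<subseteq> S) \<and>
        (\<forall>k<n. \<forall>l<n. k \<noteq> l \<longrightarrow> {a k<..<b k} \<inter> {a l<..<b l} = {}) \<and>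
        (\<Sum>k<n. b k - a k) < d1
        \<longrightarrow> (\<Sum>k<n. \<bar>f (b k) - f (a k)\<bar>) < e/2"
    using f[unfolded abs_cont_on_def, rule_format, of "e/2"] e by auto
  obtain d2 where d2: "d2 > 0" and H2: "\<forall>(n::nat) (a::nat\<Rightarrow>real) (b::nat\<Rightarrow>real).
        (\<forall>k<n. a k \<le> b k \<and> {a k..b k} \<subseteq> S) \<and>
        (\<forall>k<n. \<forall>l<n. k \<noteq> l \<longrightarrow> {a k<..<b k} \<inter> {a l<..<b l} = {}) \<and>
        (\<Sum>k<n. b k - a k) < d2
        \<longrightarrow> (\<Sum>k<n. \<bar>g (b k) - g (a k)\<bar>) < e/2"
    using g[unfolded abs_cont_on_def, rule_format, of "e/2"] e by auto
  show "\<exists>\<delta>>0. \<forall>(n::nat) a b.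
        (\<forall>k<n. a k \<le> b k \<and> {a k..b k} \<subseteq> S) \<and>
        (\<forall>k<n. \<forall>l<n. k \<noteq> l \<longrightarrow> {a k<..<b k} \<inter> {a l<..<b l} = {}) \<and>
        (\<Sum>k<n. b k - a k) < \<delta> \<longrightarrow> (\<Sum>k<n. \<bar>f (b k) + g (b k) - (f (a k) + g (a k))\<bar>) < e"
  proof (intro exI[of _ "min d1 d2"] conjI allI impI)
    show "min d1 d2 > 0" using d1 d2 by simp
    fix n :: nat and a b :: "nat \<Rightarrow> real"
    assume H: "(\<forall>k<n. a k \<le> b k \<and> {a k..b k} \<subseteq> S) \<and>
        (\<forall>k<n. \<forall>l<n. k \<noteq> l \<longrightarrow> {a k<..<b k} \<inter> {a l<..<b l} = {}) \<and>
        (\<Sum>k<n. b k - a k) < min d1 d2"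
    have "(\<Sum>k<n. \<bar>f (b k) + g (b k) - (f (a k) + g (a k))\<bar>) \<le>
          (\<Sum>k<n. \<bar>f (b k) - f (a k)\<bar> + \<bar>g (b k) - g (a k)\<bar>)"
      by (intro sum_mono) linarith
    also have "\<dots> = (\<Sum>k<n. \<bar>f (b k) - f (a k)\<bar>) + (\<Sum>k<n. \<bar>g (b k) - g (a k)\<bar>)"
      by (simp add: sum.distrib)
    also have "\<dots> < e/2 + e/2"
      using H H1[rule_format, of n a b] H2[rule_format, of n a b] by (intro add_strict_mono) auto
    finally show "(\<Sum>k<n. \<bar>f (b k) + g (b k) - (f (a k) + g (a k))\<bar>) < e" by simp
  qed
qed

lemma ac_mult:
  assumes f: "abs_cont_on {a..b} f" and g: "abs_cont_on {a..b} g"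
  shows "abs_cont_on {a..b} (\<lambda>t. f t * g t)"
proof -
  have "compact (f ` {a..b})" "compact (g ` {a..b})"
    using ac_cont[OF f] ac_cont[OF g] by (auto intro: compact_continuous_image)
  then obtain M1 M2 where M1: "\<And>t. t \<in> {a..b} \<Longrightarrow> \<bar>f t\<bar> \<le> M1" and M2: "\<And>t. t \<in> {a..b} \<Longrightarrow> \<bar>g t\<bar> \<le> M2"
    by (metis compact_imp_bounded bounded_real imageI)
  show ?thesis
  unfolding abs_cont_on_def
  proof (intro allI impI)
    fix e :: real assume e: "0 < e"
    define A where "A = 2 * (\<bar>M1\<bar> + \<bar>M2\<bar> + 1)"
    have A: "A > 0" by (simp add: A_def add_pos_nonneg)
    obtain d1 where d1: "d1 > 0" and H1: "\<forall>(n::nat) (a'::nat\<Rightarrow>real) (b'::nat\<Rightarrow>real).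
          (\<forall>k<n. a' k \<le> b' k \<and> {a' k..b' k} \<subseteq> {a..b}) \<and>
          (\<forall>k<n. \<forall>l<n. k \<noteq> l \<longrightarrow> {a' k<..<b' k} \<inter> {a' l<..<b' l} = {}) \<and>
          (\<Sum>k<n. b' k - a' k) < d1
          \<longrightarrow> (\<Sum>k<n. \<bar>f (b' k) - f (a' k)\<bar>) < e/A"
      using f[unfolded abs_cont_on_def, rule_format, of "e/A"] e A by auto
    obtain d2 where d2: "d2 > 0" and H2: "\<forall>(n::nat) (a'::nat\<Rightarrow>real) (b'::nat\<Rightarrow>real).
          (\<forall>k<n. a' k \<le> b' k \<and> {a' k..b' k} \<subseteq> {a..b}) \<and>
          (\<forall>k<n. \<forall>l<n. k \<noteq> l \<longrightarrow> {a' k<..<b' k} \<inter> {a' l<..<b' l} = {}) \<and>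
          (\<Sum>k<n. b' k - a' k) < d2
          \<longrightarrow> (\<Sum>k<n. \<bar>g (b' k) - g (a' k)\<bar>) < e/A"
      using g[unfolded abs_cont_on_def, rule_format, of "e/A"] e A by auto
    show "\<exists>\<delta>>0. \<forall>(n::nat) a' b'.
          (\<forall>k<n. a' k \<le> b' k \<and> {a' k..b' k} \<subseteq> {a..b}) \<and>
          (\<forall>k<n. \<forall>l<n. k \<noteq> l \<longrightarrow> {a' k<..<b' k} \<inter> {a' l<..<b' l} = {}) \<and>
          (\<Sum>k<n. b' k - a' k) < \<delta> \<longrightarrow> (\<Sum>k<n. \<bar>f (b' k) * g (b' k) - f (a' k) * g (a' k)\<bar>) < e"
    proof (intro exI[of _ "min d1 d2"] conjI allI impI)
      show "min d1 d2 > 0" using d1 d2 by simp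
      fix n :: nat and a' b' :: "nat \<Rightarrow> real"
      assume H: "(\<forall>k<n. a' k \<le> b' k \<and> {a' k..b' k} \<subseteq> {a..b}) \<and>
          (\<forall>k<n. \<forall>l<n. k \<noteq> l \<longrightarrow> {a' k<..<b' k} \<inter> {a' l<..<b' l} = {}) \<and>
          (\<Sum>k<n. b' k - a' k) < min d1 d2"
      have s1: "(\<Sum>k<n. \<bar>f (b' k) - f (a' k)\<bar>) < e/A" using H H1[rule_format, of n a' b'] by auto
      have s2: "(\<Sum>k<n. \<bar>g (b' k) - g (a' k)\<bar>) < e/A" using H H2[rule_format, of n a' b'] by auto
      have "(\<Sum>k<n. \<bar>f (b' k) * g (b' k) - f (a' k) * g (a' k)\<bar>) \<le>
            (\<Sum>k<n. \<bar>M1\<bar> * \<bar>g (b' k) - g (a' k)\<bar> + \<bar>M2\<bar> * \<bar>f (b' k) - f (a' k)\<bar>)"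
      proof (rule sum_mono)
        fix k assume "k \<in> {..<n}"
        then have k: "a' k \<in> {a..b}" "b' k \<in> {a..b}" using H by auto
        have eq: "f (b' k) * g (b' k) - f (a' k) * g (a' k) =
               f (b' k) * (g (b' k) - g (a' k)) + g (a' k) * (f (b' k) - f (a' k))"
          by (simp add: algebra_simps)
        have "\<bar>f (b' k) * (g (b' k) - g (a' k))\<bar> \<le> \<bar>M1\<bar> * \<bar>g (b' k) - g (a' k)\<bar>"
          unfolding abs_mult using M1[OF k(2)] by (intro mult_right_mono) auto
        moreover have "\<bar>g (a' k) * (f (b' k) - f (a' k))\<bar> \<le> \<bar>M2\<bar> * \<bar>f (b' k) - f (a' k)\<bar>"
          unfolding abs_mult using M2[OF k(1)] by (intro mult_right_mono) auto
        ultimately show "\<bar>f (b' k) * g (b' k) - f (a' k) * g (a' k)\<bar> \<le>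
            \<bar>M1\<bar> * \<bar>g (b' k) - g (a' k)\<bar> + \<bar>M2\<bar> * \<bar>f (b' k) - f (a' k)\<bar>"
          unfolding eq by linarith
      qed
      also have "\<dots> = \<bar>M1\<bar> * (\<Sum>k<n. \<bar>g (b' k) - g (a' k)\<bar>) + \<bar>M2\<bar> * (\<Sum>k<n. \<bar>f (b' k) - f (a' k)\<bar>)"
        by (simp add: sum.distrib sum_distrib_left)
      also have "\<dots> \<le> \<bar>M1\<bar> * (e/A) + \<bar>M2\<bar> * (e/A)"
        using s1 s2 by (intro add_mono mult_left_mono) auto
      also have "\<dots> < e"
      proof -
        have "(\<bar>M1\<bar> + \<bar>M2\<bar>) * (e/A) < A * (e/A)"
          using e A by (intro mult_strict_right_mono) (auto simp: A_def)
        then show ?thesis using A by (simp add: algebra_simps)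
      qed
      finally show "(\<Sum>k<n. \<bar>f (b' k) * g (b' k) - f (a' k) * g (a' k)\<bar>) < e" .
    qed
  qed
qed



lemma luzin:
  fixes h :: "real \<Rightarrow> real"
  assumes ac: "abs_cont_on {a..b} h"
    and NS: "N \<subseteq> {a..b}" and Nn: "negligible N"
  shows "negligible (h ` N)"
proof -
  have ct: "continuous_on {a..b} h" using ac_cont[OF ac] .
  have "\<exists>T. h ` N \<subseteq> T \<and> T \<in> lmeasurable \<and> measure lebesgue T \<le> e" if e: "e > 0" for e
  proof -
    obtain d where d: "d > 0" and H: "\<forall>(n::nat) (a'::nat\<Rightarrow>real) (b'::nat\<Rightarrow>real).
          (\<forall>k<n. a' k \<le> b' k \<and> {a' k..b' k} \<subseteq> {a..b}) \<and>
          (\<forall>k<n. \<forall>l<n. k \<noteq> l \<longrightarrow> {a' k<..<b' k} \<inter> {a' l<..<b' l} = {}) \<and>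
          (\<Sum>k<n. b' k - a' k) < d
          \<longrightarrow> (\<Sum>k<n. \<bar>h (b' k) - h (a' k)\<bar>) < e"
      using ac[unfolded abs_cont_on_def, rule_format, of e] e by auto
    have Nm: "N \<in> lmeasurable" "measure lebesgue N = 0"
      using Nn by (auto simp: negligible_iff_measure)
    obtain \<D> where Dc: "countable \<D>"
      and DK: "\<And>K. K \<in> \<D> \<Longrightarrow> K \<subseteq> cbox a b \<and> K \<noteq> {} \<and> (\<exists>c d. K = cbox c d)"
      and Dp: "pairwise (\<lambda>A B. interior A \<inter> interior B = {}) \<D>"
      and "\<And>u v. cbox u v \<in> \<D> \<Longrightarrow> \<exists>n. \<forall>i \<in> Basis. v \<bullet> i - u \<bullet> i = (b \<bullet> i - a \<bullet> i)/2^n"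
      and "\<And>K. \<lbrakk>K \<in> \<D>; box a b \<noteq> {}\<rbrakk> \<Longrightarrow> interior K \<noteq> {}"
      and ND: "N \<subseteq> \<Union>\<D>" and Dm: "\<Union>\<D> \<in> lmeasurable" "measure lebesgue (\<Union>\<D>) \<le> measure lebesgue N + d/2"
    proof (rule measurable_outer_intervals_bounded[of N a b "d/2"])
      show "N \<in> lmeasurable" by (rule Nm(1))
      show "N \<subseteq> cbox a b" using NS by (simp add: cbox_interval)
      show "0 < d/2" using d by simp
    qed blast
    have Kiv: "\<exists>c e. K = {c..e} \<and> c \<le> e \<and> {c..e} \<subseteq> {a..b}" if KD: "K \<in> \<D>" for K
    proof -
      obtain c e where K: "K = cbox c e" "K \<subseteq> cbox a b" "K \<noteq> {}" using DK[OF KD] by blast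
      then have "c \<le> e" by (auto simp: cbox_interval)
      then show ?thesis using K by (auto simp: cbox_interval)
    qed
    have "\<exists>p q. p \<in> K \<and> q \<in> K \<and> (\<forall>x\<in>K. h p \<le> h x \<and> h x \<le> h q)" if KD: "K \<in> \<D>" for K
    proof -
      obtain c e where K: "K = {c..e}" "c \<le> e" "{c..e} \<subseteq> {a..b}" using Kiv[OF KD] by blast
      have cK: "continuous_on K h" using ct K continuous_on_subset by blast
      have "compact K" "K \<noteq> {}" using K by auto
      then obtain p q where "p \<in> K" "\<forall>y\<in>K. h p \<le> h y" "q \<in> K" "\<forall>y\<in>K. h y \<le> h q"
        using continuous_attains_inf[OF _ _ cK] continuous_attains_sup[OF _ _ cK] by metis
      then show ?thesis by blast
    qed
    then obtain p q where pq: "\<And>K. K \<in> \<D> \<Longrightarrow> p K \<in> K \<and> q K \<in> K \<and> (\<forall>x\<in>K. h (p K) \<le> h x \<and> h x \<le> h (q K))"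
      by metis
    define u where "u K = min (p K) (q K)" for K
    define v where "v K = max (p K) (q K)" for K
    have uv: "u K \<le> v K" "{u K..v K} \<subseteq> K" "\<bar>h (v K) - h (u K)\<bar> = h (q K) - h (p K)" if KD: "K \<in> \<D>" for K
    proof -
      obtain c e where K: "K = {c..e}" "c \<le> e" "{c..e} \<subseteq> {a..b}" using Kiv[OF KD] by blast
      show "u K \<le> v K" by (simp add: u_def v_def)
      show "{u K..v K} \<subseteq> K" using pq[OF KD] K by (auto simp: u_def v_def)
      have "h (p K) \<le> h (q K)" using pq[OF KD] by blast
      then show "\<bar>h (v K) - h (u K)\<bar> = h (q K) - h (p K)"
        by (auto simp: u_def v_def min_def max_def)
    qed
    define T where "T = (\<Union>K\<in>\<D>. {h (p K)..h (q K)})"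
    have hNT: "h ` N \<subseteq> T"
    proof
      fix y assume "y \<in> h ` N"
      then obtain x where x: "x \<in> N" "y = h x" by blast
      then obtain K where "K \<in> \<D>" "x \<in> K" using ND by blast
      then show "y \<in> T" using pq[of K] x unfolding T_def by auto
    qed
    have neg_int: "negligible (K \<inter> K')" if KK: "K \<in> \<D>" "K' \<in> \<D>" "K \<noteq> K'" for K K'
    proof -
      obtain c e where K: "K = {c..e}" using Kiv[OF KK(1)] by blast
      obtain c' e' where K': "K' = {c'..e'}" using Kiv[OF KK(2)] by blast
      have "interior K \<inter> interior K' = {}" using Dp KK unfolding pairwise_def by blast
      then have "K \<inter> K' \<subseteq> {c, e, c', e'}" unfolding K K' interior_atLeastAtMost_real by auto
      then show ?thesis by (rule negligible_subset[rotated]) auto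
    qed
    have bound: "measure lebesgue (\<Union>K\<in>\<E>. {h (p K)..h (q K)}) \<le> e" if E: "\<E> \<subseteq> \<D>" "finite \<E>" for \<E>
    proof -
      have "measure lebesgue (\<Union>K\<in>\<E>. {h (p K)..h (q K)}) \<le> (\<Sum>K\<in>\<E>. measure lebesgue {h (p K)..h (q K)})"
        using E by (intro measure_UNION_le) auto
      also have "\<dots> = (\<Sum>K\<in>\<E>. \<bar>h (v K) - h (u K)\<bar>)"
      proof (intro sum.cong refl)
        fix K assume "K \<in> \<E>"
        then have K: "K \<in> \<D>" using E by auto
        have "h (p K) \<le> h (q K)" using pq[OF K] by blast
        then show "measure lebesgue {h (p K)..h (q K)} = \<bar>h (v K) - h (u K)\<bar>"
          using uv(3)[OF K] by simp
      qed
      also have "\<dots> < e"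
      proof -
        obtain f where f: "bij_betw f {0..<card \<E>} \<E>" using ex_bij_betw_nat_finite[OF E(2)] by blast
        have fE: "f k \<in> \<E>" if "k < card \<E>" for k using f that by (auto dest: bij_betwE)
        have finj: "f k \<noteq> f l" if "k < card \<E>" "l < card \<E>" "k \<noteq> l" for k l
          using f that unfolding bij_betw_def inj_on_def by auto
        have s1: "(\<Sum>K\<in>\<E>. \<bar>h (v K) - h (u K)\<bar>) = (\<Sum>k<card \<E>. \<bar>h (v (f k)) - h (u (f k))\<bar>)"
          using sum.reindex_bij_betw[OF f, of "\<lambda>K. \<bar>h (v K) - h (u K)\<bar>"] by (simp add: atLeast0LessThan)
        have s2: "(\<Sum>K\<in>\<E>. v K - u K) = (\<Sum>k<card \<E>. v (f k) - u (f k))"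
          using sum.reindex_bij_betw[OF f, of "\<lambda>K. v K - u K"] by (simp add: atLeast0LessThan)
        have "(\<Sum>K\<in>\<E>. v K - u K) \<le> (\<Sum>K\<in>\<E>. measure lebesgue K)"
        proof (rule sum_mono)
          fix K assume "K \<in> \<E>"
          then have K: "K \<in> \<D>" using E by auto
          obtain c e where Ke: "K = {c..e}" "c \<le> e" using Kiv[OF K] by blast
          have "measure lebesgue {u K..v K} \<le> measure lebesgue K"
            using uv(2)[OF K] Ke by (intro measure_mono_fmeasurable) auto
          then show "v K - u K \<le> measure lebesgue K" using uv(1)[OF K] by simp
        qed
        also have "\<dots> = measure lebesgue (\<Union>\<E>)"
        proof (rule measure_negligible_finite_Union[symmetric])
          show "finite \<E>" by fact
          show "S \<in> lmeasurable" if "S \<in> \<E>" for S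
            using Kiv[of S] that E by auto
          show "pairwise (\<lambda>S T. negligible (S \<inter> T)) \<E>"
            using neg_int E unfolding pairwise_def by blast
        qed
        also have "\<dots> \<le> measure lebesgue (\<Union>\<D>)"
        proof (rule measure_mono_fmeasurable)
          show "\<Union>\<E> \<subseteq> \<Union>\<D>" using E by auto
          have "K \<in> sets lebesgue" if KE: "K \<in> \<E>" for K
          proof -
            obtain c e where "K = {c..e}" using Kiv[of K] KE E by blast
            then show ?thesis using fmeasurableD[OF lmeasurable_cbox[of c e]] by (simp add: cbox_interval)
          qed
          then show "\<Union>\<E> \<in> sets lebesgue"
            using E by (intro sets.finite_Union) auto
          show "\<Union>\<D> \<in> lmeasurable" by fact
        qed
        also have "\<dots> < d" using Dm Nm d by simp
        finally have sd: "(\<Sum>k<card \<E>. v (f k) - u (f k)) < d" using s2 by simp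
        have "(\<Sum>k<card \<E>. \<bar>h (v (f k)) - h (u (f k))\<bar>) < e"
        proof (rule H[THEN spec[of _ "card \<E>"], THEN spec[of _ "\<lambda>k. u (f k)"], THEN spec[of _ "\<lambda>k. v (f k)"], THEN mp], intro conjI allI impI)
          fix k assume k: "k < card \<E>"
          then have K: "f k \<in> \<D>" using fE E by auto
          show "u (f k) \<le> v (f k)" using uv(1)[OF K] .
          show "{u (f k)..v (f k)} \<subseteq> {a..b}" using uv(2)[OF K] Kiv[OF K] by blast
        next
          fix k l assume kl: "k < card \<E>" "l < card \<E>" "k \<noteq> l"
          have K: "f k \<in> \<D>" "f l \<in> \<D>" using fE E kl by auto
          have ne: "f k \<noteq> f l" using finj kl .
          have "interior (f k) \<inter> interior (f l) = {}" using Dp K ne unfolding pairwise_def by blast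
          moreover have "{u (f k)<..<v (f k)} \<subseteq> interior (f k)"
            using uv(2)[OF K(1)] interior_mono by (metis interior_atLeastAtMost_real)
          moreover have "{u (f l)<..<v (f l)} \<subseteq> interior (f l)"
            using uv(2)[OF K(2)] interior_mono by (metis interior_atLeastAtMost_real)
          ultimately show "{u (f k)<..<v (f k)} \<inter> {u (f l)<..<v (f l)} = {}" by blast
        next
          show "(\<Sum>k<card \<E>. v (f k) - u (f k)) < d" by fact
        qed
        then show ?thesis using s1 by simp
      qed
      finally show ?thesis by simp
    qed
    have mK: "{h (p K)..h (q K)} \<in> lmeasurable" if "K \<in> \<D>" for K
      using lmeasurable_cbox[of "h (p K)" "h (q K)"] by (simp add: cbox_interval)
    have "T \<in> lmeasurable" unfolding T_def
      by (rule fmeasurable_UN_bound[OF Dc mK bound])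
    moreover have "measure lebesgue T \<le> e" unfolding T_def
      by (rule measure_UN_bound[OF Dc mK bound])
    ultimately show ?thesis using hNT by blast
  qed
  then show ?thesis by (simp add: negligible_outer_le)
qed



lemma decr:
  fixes g :: "real \<Rightarrow> real"
  assumes ab: "a \<le> b" and ac: "abs_cont_on {a..b} g"
    and der: "AE t in lborel. t \<in> {a<..<b} \<longrightarrow> (\<exists>D\<le>0. (g has_real_derivative D) (at t))"
  shows "g b \<le> g a"
proof -
  obtain N0 where N0: "{x\<in>space lebesgue. \<not> (x \<in> {a<..<b} \<longrightarrow> (\<exists>D\<le>0. (g has_real_derivative D) (at x)))} \<subseteq> N0"
      "emeasure lebesgue N0 = 0" "N0 \<in> sets lebesgue"
    using AE_E[OF AE_completion[OF der]] by blast
  have nN0: "negligible N0" using N0 by (simp add: negligible_iff_null_sets null_sets_def)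
  define N where "N = {a..b} - {t. t\<in>{a<..<b} \<and> (\<exists>D\<le>0. (g has_real_derivative D)(at t))}"
  have "N \<subseteq> N0 \<union> {a, b}"
  proof
    fix t assume t: "t \<in> N"
    show "t \<in> N0 \<union> {a, b}"
    proof (cases "t \<in> {a<..<b}")
      case True
      then have "t \<in> N0" using t N0(1) unfolding N_def by auto
      then show ?thesis by simp
    next
      case False
      then show ?thesis using t unfolding N_def by auto
    qed
  qed
  moreover have "negligible (N0 \<union> {a, b})" using nN0 by simp
  ultimately have nN: "negligible N" by (rule negligible_subset[rotated])
  have NS: "N \<subseteq> {a..b}" unfolding N_def by auto
  have key: "g b - \<epsilon> * b \<le> g a - \<epsilon> * a" if \<epsilon>: "\<epsilon> > 0" for \<epsilon>
  proof (rule ccontr)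
    define h where "h t = g t - \<epsilon> * t" for t
    assume "\<not> (g b - \<epsilon> * b \<le> g a - \<epsilon> * a)"
    then have hab: "h a < h b" by (simp add: h_def)
    have heq: "h = (\<lambda>t. g t + (- \<epsilon> * t))" by (auto simp: h_def fun_eq_iff)
    have "abs_cont_on {a..b} (\<lambda>t. - \<epsilon> * t)"
      by (rule ac_lip[of _ _ \<epsilon>]) (use \<epsilon> in \<open>simp add: abs_mult right_diff_distrib[symmetric]\<close>)
    then have ach: "abs_cont_on {a..b} h" unfolding heq by (rule ac_add[OF ac])
    have cth: "continuous_on {a..b} h" by (rule ac_cont[OF ach])
    have nhN: "negligible (h ` N)" by (rule luzin[OF ach NS nN])
    have "{h a<..<h b} \<subseteq> h ` N"
    proof
      fix y assume y: "y \<in> {h a<..<h b}"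
      define S where "S = {a..b} \<inter> h -` {y}"
      have Sc: "closed S" unfolding S_def by (rule continuous_closed_preimage[OF cth]) auto
      obtain x0 where x0: "a \<le> x0" "x0 \<le> b" "h x0 = y"
        using IVT'[of h a y b] y ab cth by auto
      have Sne: "S \<noteq> {}" using x0 unfolding S_def by auto
      have Sbd: "bdd_above S" unfolding S_def by (auto intro: bdd_aboveI[of _ b])
      define s where "s = Sup S"
      have sS: "s \<in> S" unfolding s_def by (rule closed_contains_Sup[OF Sne Sbd Sc])
      then have s: "a \<le> s" "s \<le> b" "h s = y" unfolding S_def by auto
      have sup: "t \<le> s" if "t \<in> S" for t unfolding s_def by (rule cSup_upper[OF that Sbd])
      have sb: "s < b" using s y by (cases "s = b") auto
      have above: "h t > y" if t: "s < t" "t \<le> b" for t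
      proof (rule ccontr)
        assume "\<not> y < h t"
        then have "h t \<le> y" by simp
        moreover have "continuous_on {t..b} h" using cth t s by (auto intro: continuous_on_subset)
        ultimately obtain x where x: "t \<le> x" "x \<le> b" "h x = y"
          using IVT'[of h t y b] y t by auto
        then have "x \<in> S" using s t unfolding S_def by auto
        then have "x \<le> s" by (rule sup)
        then show False using x t by simp
      qed
      have "s \<in> N"
      proof (rule ccontr)
        assume "s \<notin> N"
        then obtain D where D: "s \<in> {a<..<b}" "D \<le> 0" "(g has_real_derivative D) (at s)"
          using s unfolding N_def by auto
        have "(h has_real_derivative (D - \<epsilon>)) (at s)"
          unfolding h_def by (auto intro!: derivative_eq_intros D(3))
        moreover have "D - \<epsilon> < 0" using D \<epsilon> by simp
        ultimately obtain d where d: "d > 0" "\<forall>\<eta>>0. \<eta> < d \<longrightarrow> h (s + \<eta>) < h s"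
          using DERIV_neg_dec_right by blast
        define \<eta> where "\<eta> = min d (b - s) / 2"
        have \<eta>: "\<eta> > 0" "\<eta> < d" "s + \<eta> \<le> b" using d(1) sb by (auto simp: \<eta>_def min_def field_simps)
        have "h (s + \<eta>) < h s" using d \<eta> by blast
        moreover have "h (s + \<eta>) > y" using above[of "s + \<eta>"] \<eta> by simp
        ultimately show False using s by simp
      qed
      then show "y \<in> h ` N" using s by blast
    qed
    then have "negligible {h a<..<h b}" using nhN by (rule negligible_subset[rotated])
    then have "negligible (box (h a) (h b))" by (simp add: box_real)
    then have "box (h a) (h b) = {}" using negligible_interval(2) by blast
    then show False using hab by (auto simp: box_real)
  qed
  show ?thesis
  proof (rule field_le_epsilon)
    fix e :: real assume e: "e > 0"
    define \<epsilon> where "\<epsilon> = e / (b - a + 1)"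
    have \<epsilon>: "\<epsilon> > 0" using e ab by (simp add: \<epsilon>_def)
    have "g b \<le> g a + \<epsilon> * (b - a)" using key[OF \<epsilon>] by (simp add: algebra_simps)
    also have "\<epsilon> * (b - a) \<le> e" unfolding \<epsilon>_def using e ab by (simp add: divide_le_eq algebra_simps)
    finally show "g b \<le> g a + e" by simp
  qed
qed



lemma lip_deriv:
  fixes f f' :: "real \<Rightarrow> real"
  assumes d: "\<And>x. (f has_real_derivative f' x) (at x)" and L: "\<And>x. x \<in> {a..b} \<Longrightarrow> \<bar>f' x\<bar> \<le> L"
    and s: "s \<in> {a..b}" and t: "t \<in> {a..b}"
  shows "\<bar>f s - f t\<bar> \<le> L * \<bar>s - t\<bar>"
proof -
  have *: "\<bar>f v - f u\<bar> \<le> L * \<bar>v - u\<bar>" if uv: "u < v" "u \<in> {a..b}" "v \<in> {a..b}" for u v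
  proof -
    obtain z where z: "u < z" "z < v" "f v - f u = (v - u) * f' z"
      using MVT2[OF uv(1), of f f'] d by blast
    have "z \<in> {a..b}" using z uv by auto
    then have "\<bar>f' z\<bar> \<le> L" by (rule L)
    then have "\<bar>v - u\<bar> * \<bar>f' z\<bar> \<le> \<bar>v - u\<bar> * L" by (intro mult_left_mono) auto
    then show ?thesis using z by (simp add: abs_mult mult.commute)
  qed
  consider "s < t" | "s = t" | "t < s" by linarith
  then show ?thesis
  proof cases
    case 1 then show ?thesis using *[of s t] s t by (simp add: abs_minus_commute)
  next
    case 2 then show ?thesis by simp
  next
    case 3 then show ?thesis using *[of t s] s t by simp
  qed
qed

lemma ac_neg:
  assumes "abs_cont_on S f" shows "abs_cont_on S (\<lambda>t. - f t)"
  using assms unfolding abs_cont_on_def by (simp add: abs_minus_commute)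

lemma ac_exp:
  assumes "c \<ge> 0"
  shows "abs_cont_on {0..T} (\<lambda>t. K * exp (c * t))"
proof (rule ac_lip)
  fix s t assume st: "s \<in> {0..T}" "t \<in> {0..T}"
  show "\<bar>K * exp (c * s) - K * exp (c * t)\<bar> \<le> \<bar>K\<bar> * c * exp (c * T) * \<bar>s - t\<bar>"
  proof (rule lip_deriv[of _ "\<lambda>x. K * (c * exp (c * x))" 0 T, OF _ _ st])
    fix x show "((\<lambda>t. K * exp (c * t)) has_real_derivative K * (c * exp (c * x))) (at x)"
      by (auto intro!: derivative_eq_intros)
  next
    fix x assume x: "x \<in> {0..T}"
    have "exp (c * x) \<le> exp (c * T)" using x assms by (auto intro: mult_left_mono)
    then have "c * exp (c * x) \<le> c * exp (c * T)" using assms by (rule mult_left_mono)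
    then have "\<bar>K\<bar> * (c * exp (c * x)) \<le> \<bar>K\<bar> * (c * exp (c * T))" by (rule mult_left_mono) simp
    then show "\<bar>K * (c * exp (c * x))\<bar> \<le> \<bar>K\<bar> * c * exp (c * T)"
      using assms by (simp add: abs_mult mult.assoc)
  qed
qed

definition decays :: "(real \<Rightarrow> real) \<Rightarrow> bool" where
  "decays f \<longleftrightarrow> (\<exists>\<alpha>>0. \<exists>\<beta>>0. \<forall>t\<ge>0. \<bar>f t\<bar> \<le> \<alpha> * exp (- \<beta> * t))"

lemma decay_upper:
  fixes y f :: "real \<Rightarrow> real"
  assumes c: "c > 0" and \<beta>: "0 < \<beta>" "\<beta> < c" and A: "A \<ge> 0"
    and ac: "\<And>T. T \<ge> 0 \<Longrightarrow> abs_cont_on {0..T} y"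
    and der: "AE t in lborel. t > 0 \<longrightarrow> (y has_real_derivative (-c * y t + f t)) (at t)"
    and fb: "\<And>t. t \<ge> 0 \<Longrightarrow> f t \<le> A * exp (-\<beta>*t)"
    and t0: "t0 \<ge> 0"
  shows "y t0 \<le> (\<bar>y 0\<bar> + A/(c-\<beta>)) * exp (-\<beta>*t0)"
proof -
  define \<gamma> where "\<gamma> = c - \<beta>"
  have \<gamma>: "\<gamma> > 0" using \<beta> by (simp add: \<gamma>_def)
  define z where "z t = exp (c * t) * y t + (- (A/\<gamma>) * exp (\<gamma> * t))" for t
  have acz: "abs_cont_on {0..t0} z"
    unfolding z_def
    by (intro ac_add ac_mult ac_exp[where K=1, simplified] ac_exp ac t0) (use c \<gamma> in auto)
  have derz: "AE t in lborel. t \<in> {0<..<t0} \<longrightarrow> (\<exists>D\<le>0. (z has_real_derivative D) (at t))"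
    using der
  proof (rule AE_mp, intro AE_I2 impI)
    fix t assume H: "0 < t \<longrightarrow> (y has_real_derivative - c * y t + f t) (at t)"
      and t: "t \<in> {0<..<t0}"
    then have dy: "(y has_real_derivative - c * y t + f t) (at t)" by auto
    have "(z has_real_derivative (c * exp (c * t) * y t + exp (c * t) * (- c * y t + f t)
            + (- (A/\<gamma>) * (\<gamma> * exp (\<gamma> * t))))) (at t)"
      unfolding z_def by (auto intro!: derivative_eq_intros dy)
    moreover have "c * exp (c * t) * y t + exp (c * t) * (- c * y t + f t)
            + (- (A/\<gamma>) * (\<gamma> * exp (\<gamma> * t))) \<le> 0"
    proof -
      have "exp (c * t) * f t \<le> exp (c * t) * (A * exp (-\<beta>*t))"
        using fb[of t] t by (intro mult_left_mono) auto
      also have "\<dots> = A * exp (\<gamma> * t)"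
        by (simp add: \<gamma>_def exp_add[symmetric] algebra_simps)
      finally show ?thesis using \<gamma> by (simp add: algebra_simps)
    qed
    ultimately show "\<exists>D\<le>0. (z has_real_derivative D) (at t)" by blast
  qed
  have "z t0 \<le> z 0" by (rule decr[OF t0 acz derz])
  then have "exp (c * t0) * y t0 \<le> y 0 - A/\<gamma> + (A/\<gamma>) * exp (\<gamma> * t0)"
    by (simp add: z_def)
  then have "exp (-c*t0) * (exp (c * t0) * y t0) \<le> exp (-c*t0) * (y 0 - A/\<gamma> + (A/\<gamma>) * exp (\<gamma> * t0))"
    by (intro mult_left_mono) auto
  also have "\<dots> = (y 0 - A/\<gamma>) * exp (-c*t0) + (A/\<gamma>) * exp (-\<beta>*t0)"
    by (simp add: algebra_simps exp_add[symmetric] \<gamma>_def)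
  also have "\<dots> \<le> \<bar>y 0\<bar> * exp (-\<beta>*t0) + (A/\<gamma>) * exp (-\<beta>*t0)"
  proof -
    have "A/\<gamma> \<ge> 0" using A \<gamma> by simp
    then have "y 0 - A/\<gamma> \<le> \<bar>y 0\<bar>" by linarith
    then have "(y 0 - A/\<gamma>) * exp (-c*t0) \<le> \<bar>y 0\<bar> * exp (-c*t0)"
      by (intro mult_right_mono) auto
    also have "\<dots> \<le> \<bar>y 0\<bar> * exp (-\<beta>*t0)"
      using \<beta> t0 by (intro mult_left_mono) (auto intro: mult_right_mono)
    finally show ?thesis by simp
  qed
  finally show ?thesis by (simp add: exp_add[symmetric] \<gamma>_def algebra_simps)
qed

lemma decay_ode:
  fixes y f :: "real \<Rightarrow> real"
  assumes c: "c > 0"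
    and ac: "\<And>T. T \<ge> 0 \<Longrightarrow> abs_cont_on {0..T} y"
    and der: "AE t in lborel. t > 0 \<longrightarrow> (y has_real_derivative (-c * y t + f t)) (at t)"
    and fd: "decays f"
  shows "decays y"
proof -
  obtain \<alpha> \<beta>0 where \<alpha>: "\<alpha> > 0" "\<beta>0 > 0" and fb0: "\<And>t. t \<ge> 0 \<Longrightarrow> \<bar>f t\<bar> \<le> \<alpha> * exp (- \<beta>0 * t)"
    using fd unfolding decays_def by blast
  define \<beta> where "\<beta> = min \<beta>0 (c/2)"
  have \<beta>: "0 < \<beta>" "\<beta> < c" using \<alpha> c by (auto simp: \<beta>_def)
  have fb: "\<bar>f t\<bar> \<le> \<alpha> * exp (- \<beta> * t)" if "t \<ge> 0" for t
  proof -
    have "\<alpha> * exp (- \<beta>0 * t) \<le> \<alpha> * exp (- \<beta> * t)"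
      using that \<alpha> by (intro mult_left_mono) (auto simp: \<beta>_def intro: mult_right_mono)
    then show ?thesis using fb0[OF that] by linarith
  qed
  have up: "y t \<le> (\<bar>y 0\<bar> + \<alpha>/(c-\<beta>)) * exp (-\<beta>*t)" if "t \<ge> 0" for t
    by (rule decay_upper[OF c \<beta> _ ac der _ that]) (use \<alpha> fb in \<open>auto simp: abs_le_iff\<close>)
  have lo: "- y t \<le> (\<bar>- y 0\<bar> + \<alpha>/(c-\<beta>)) * exp (-\<beta>*t)" if "t \<ge> 0" for t
  proof (rule decay_upper[OF c \<beta>, where f="\<lambda>t. - f t"])
    show "abs_cont_on {0..T} (\<lambda>t. - y t)" if "T \<ge> 0" for T using ac_neg[OF ac[OF that]] .
    show "AE t in lborel. 0 < t \<longrightarrow> ((\<lambda>t. - y t) has_real_derivative - c * - y t + - f t) (at t)"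
      using der by (rule AE_mp) (auto intro!: AE_I2 derivative_eq_intros)
  qed (use \<alpha> fb that in \<open>auto simp: abs_le_iff\<close>)
  have pos: "0 < \<bar>y 0\<bar> + \<alpha>/(c-\<beta>) + 1" using \<alpha> \<beta> by (auto intro: add_nonneg_pos)
  have H: "\<forall>t\<ge>0. \<bar>y t\<bar> \<le> (\<bar>y 0\<bar> + \<alpha>/(c-\<beta>) + 1) * exp (- \<beta> * t)"
  proof (intro allI impI)
    fix t :: real assume t: "t \<ge> 0"
    have "(\<bar>y 0\<bar> + \<alpha>/(c-\<beta>)) * exp (-\<beta>*t) \<le> (\<bar>y 0\<bar> + \<alpha>/(c-\<beta>) + 1) * exp (-\<beta>*t)"
      by (intro mult_right_mono) auto
    moreover have "- y t \<le> (\<bar>y 0\<bar> + \<alpha>/(c-\<beta>)) * exp (-\<beta>*t)" using lo[OF t] by simp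
    ultimately show "\<bar>y t\<bar> \<le> (\<bar>y 0\<bar> + \<alpha>/(c-\<beta>) + 1) * exp (- \<beta> * t)"
      using up[OF t] unfolding abs_le_iff by linarith
  qed
  show ?thesis unfolding decays_def using pos \<beta>(1) H by blast
qed

lemma decays_le:
  assumes g: "decays g" and le: "\<And>t. t \<ge> 0 \<Longrightarrow> \<bar>f t\<bar> \<le> g t"
  shows "decays f"
proof -
  obtain a1 b1 where 1: "a1 > 0" "b1 > 0" "\<And>t. t \<ge> 0 \<Longrightarrow> \<bar>g t\<bar> \<le> a1 * exp (- b1 * t)"
    using g unfolding decays_def by blast
  have "\<forall>t\<ge>0. \<bar>f t\<bar> \<le> a1 * exp (- b1 * t)"
    using 1(3) le by (meson abs_ge_self order_trans)
  then show ?thesis unfolding decays_def using 1 by blast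
qed

lemma decays_zero: "decays (\<lambda>t. 0)"
proof -
  have "\<forall>t\<ge>0. \<bar>(0::real)\<bar> \<le> 1 * exp (- 1 * t)" by simp
  then show ?thesis unfolding decays_def by (meson zero_less_one)
qed

lemma decays_add:
  assumes f: "decays f" and g: "decays g"
  shows "decays (\<lambda>t. f t + g t)"
proof -
  obtain a1 b1 where 1: "a1 > 0" "b1 > 0" "\<And>t. t \<ge> 0 \<Longrightarrow> \<bar>f t\<bar> \<le> a1 * exp (- b1 * t)"
    using f unfolding decays_def by blast
  obtain a2 b2 where 2: "a2 > 0" "b2 > 0" "\<And>t. t \<ge> 0 \<Longrightarrow> \<bar>g t\<bar> \<le> a2 * exp (- b2 * t)"
    using g unfolding decays_def by blast
  have pos: "a1 + a2 > 0" "min b1 b2 > 0" using 1 2 by auto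
  have H: "\<forall>t\<ge>0. \<bar>f t + g t\<bar> \<le> (a1 + a2) * exp (- min b1 b2 * t)"
  proof (intro allI impI)
    fix t :: real assume t: "t \<ge> 0"
    have e1: "a1 * exp (- b1 * t) \<le> a1 * exp (- min b1 b2 * t)"
      using 1 t by (intro mult_left_mono) (auto intro: mult_right_mono)
    have e2: "a2 * exp (- b2 * t) \<le> a2 * exp (- min b1 b2 * t)"
      using 2 t by (intro mult_left_mono) (auto intro: mult_right_mono)
    have "\<bar>f t + g t\<bar> \<le> \<bar>f t\<bar> + \<bar>g t\<bar>" by (rule abs_triangle_ineq)
    also have "\<dots> \<le> a1 * exp (- min b1 b2 * t) + a2 * exp (- min b1 b2 * t)"
      using 1(3)[OF t] 2(3)[OF t] e1 e2 by linarith
    finally show "\<bar>f t + g t\<bar> \<le> (a1 + a2) * exp (- min b1 b2 * t)" by (simp add: algebra_simps)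
  qed
  show ?thesis unfolding decays_def using pos H by blast
qed

lemma decays_scale:
  assumes f: "decays f" shows "decays (\<lambda>t. k * f t)"
proof -
  obtain a1 b1 where 1: "a1 > 0" "b1 > 0" "\<And>t. t \<ge> 0 \<Longrightarrow> \<bar>f t\<bar> \<le> a1 * exp (- b1 * t)"
    using f unfolding decays_def by blast
  have pos: "(\<bar>k\<bar>+1) * a1 > 0" using 1 by (simp add: add_nonneg_pos)
  have H: "\<forall>t\<ge>0. \<bar>k * f t\<bar> \<le> ((\<bar>k\<bar>+1) * a1) * exp (- b1 * t)"
  proof (intro allI impI)
    fix t :: real assume t: "t \<ge> 0"
    have "\<bar>k * f t\<bar> \<le> (\<bar>k\<bar>+1) * \<bar>f t\<bar>" by (simp add: abs_mult mult_right_mono)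
    also have "\<dots> \<le> (\<bar>k\<bar>+1) * (a1 * exp (- b1 * t))" using 1(3)[OF t] by (intro mult_left_mono) auto
    finally show "\<bar>k * f t\<bar> \<le> ((\<bar>k\<bar>+1) * a1) * exp (- b1 * t)" by (simp add: mult.assoc)
  qed
  show ?thesis unfolding decays_def using pos 1(2) H by blast
qed

lemma decays_sum:
  assumes "finite S" "\<And>i. i \<in> S \<Longrightarrow> decays (f i)"
  shows "decays (\<lambda>t. \<Sum>i\<in>S. f i t)"
  using assms
proof (induction S rule: finite_induct)
  case empty then show ?case by (simp add: decays_zero)
next
  case (insert x F)
  then show ?case by (simp add: decays_add)
qed



lemma xcol_nonneg:
  assumes "in_S I X" "i \<le> I" shows "xcol X i \<ge> 0"
  using assms unfolding in_S_def xcol_def by (auto intro!: sum_nonneg)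

lemma colsum_pos:
  assumes "in_S I X" "X 0 0 > 0" "k \<le> I" shows "(\<Sum>i\<le>k. xcol X i) \<noteq> 0"
proof -
  have "xcol X 0 \<le> (\<Sum>i\<le>k. xcol X i)"
    by (rule member_le_sum) (use assms xcol_nonneg in auto)
  moreover have "xcol X 0 = X 0 0" by (simp add: xcol_def)
  ultimately show ?thesis using assms by simp
qed

lemma RR0: assumes "in_S I X" "X 0 0 > 0" "k \<le> I" shows "RR lam d I X k = 0"
  using colsum_pos[OF assms] unfolding RR_def by simp

lemma GG0: assumes "in_S I X" "X 0 0 > 0" "k \<le> I" shows "GG lam d I X k = 0"
  using colsum_pos[OF assms] unfolding GG_def by simp

lemma rho0: assumes "in_S I X" "X 0 0 > 0" "k \<le> I" shows "rho lam d I X k a b = 0"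
  using RR0[OF assms] unfolding rho_def by simp

lemma drift_offdiag:
  assumes S: "in_S I X" "X 0 0 > 0" and ij: "i < j" "j \<le> I" and I: "1 < I"
  shows "drift lam d I X i j = X (i+1) j - (if i > 0 then X i j else 0) - lam * real d * X i j"
proof -
  have R: "\<And>k a b. k \<le> I \<Longrightarrow> rho lam d I X k a b = 0" by (rule rho0[OF S])
  have j1: "j - Suc 0 \<le> I" "j - 2 \<le> I" "I - Suc 0 \<le> I" "I - 2 \<le> I" using ij by auto
  show ?thesis using ij unfolding drift_def by (simp add: R j1)
qed

lemma drift_diag:
  assumes S: "in_S I X" "X 0 0 > 0" and i: "1 \<le> i" "i < I"
  shows "drift lam d I X i i = - X i i + lam * real d * (\<Sum>j\<in>{Suc i..I}. X i j) + (if i = 1 then lam else 0)"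
proof -
  have xr: "xrow I X i - X i i = (\<Sum>j\<in>{Suc i..I}. X i j)"
    unfolding xrow_def using i by (simp add: sum.atLeast_Suc_atMost)
  show ?thesis
  proof (cases "i = 1")
    case True
    have "RR lam d I X 0 = 0" "rho lam d I X 0 1 1 = 0" "GG lam d I X 1 = 0"
      using i by (auto intro: RR0[OF S] rho0[OF S] GG0[OF S])
    then show ?thesis using True xr unfolding drift_def by simp
  next
    case False
    have "rho lam d I X (i-1) i i = 0" "rho lam d I X (i-2) (i-1) (i-1) = 0"
         "GG lam d I X (i-1) = 0" "GG lam d I X i = 0"
      using i by (auto intro: rho0[OF S] GG0[OF S])
    then show ?thesis using False i xr unfolding drift_def by simp
  qed
qed

lemma drift_II:
  assumes S: "in_S I X" "X 0 0 > 0" and I: "1 < I"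
  shows "drift lam d I X I I = - X I I"
proof -
  have "rho lam d I X (I-2) (I-1) (I-1) = 0" "GG lam d I X (I-1) = 0" "rho lam d I X (I-1) (I-1) I = 0"
    using I by (auto intro: rho0[OF S] GG0[OF S])
  then show ?thesis using I unfolding drift_def by simp
qed

lemma xstar_id:
  assumes "i < j" "real d > 0"
  shows "((if i > 0 then 1 else 0) + lam * real d) * xstar lam d i j = xstar lam d (i+1) j"
  using assms unfolding xstar_def by auto



theorem mainTheorem11:
  fixes lam :: real and d I :: nat and x :: "real \<Rightarrow> nat \<Rightarrow> nat \<Rightarrow> real"
  assumes "0 < lam" "lam < 1" "2 \<le> d" "1 < I"
    and "lam < 1 - 1 / real d"
    and "fluid_solution lam d I x"
    and "\<forall>t\<ge>0. x t 0 0 > 0"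
  shows "\<exists>\<alpha>>0. \<exists>\<beta>>0. \<forall>t\<ge>0. state_dist I (x t) (xstar lam d) \<le> \<alpha> * exp (- \<beta> * t)"
proof -
  note fs = assms(6)[unfolded fluid_solution_def]
  have I: "1 < I" by fact
  have inS: "\<And>t. t \<ge> 0 \<Longrightarrow> in_S I (x t)" using fs by blast
  have AC: "\<And>i j T. j \<le> I \<Longrightarrow> i \<le> j \<Longrightarrow> T \<ge> 0 \<Longrightarrow> abs_cont_on {0..T} (\<lambda>t. x t i j)"
    using fs by blast
  have AEd: "AE t in lborel. t > 0 \<longrightarrow> (\<forall>j\<le>I. \<forall>i\<le>j. ((\<lambda>s. x s i j) has_real_derivative drift lam d I (x t) i j) (at t))"
    using fs by blast
  have pos00: "\<And>t. t \<ge> 0 \<Longrightarrow> x t 0 0 > 0" using assms(7) by blast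
  have dpos: "real d > 0" using assms(3) by simp
  have ldpos: "lam * real d > 0" using dpos assms(1) by simp
  define xs where "xs = xstar lam d"
  define e where "e i j t = x t i j - xs i j" for i j t
  have acE: "abs_cont_on {0..T} (e i j)" if "j \<le> I" "i \<le> j" "T \<ge> 0" for i j T
  proof -
    have "abs_cont_on {0..T} (\<lambda>t. - xs i j)" by (rule ac_lip[of _ _ 0]) simp
    then have "abs_cont_on {0..T} (\<lambda>t. x t i j + - xs i j)" by (rule ac_add[OF AC[OF that]])
    moreover have "e i j = (\<lambda>t. x t i j + - xs i j)" by (simp add: e_def fun_eq_iff)
    ultimately show ?thesis by simp
  qed
  have gen: "decays (e i j)"
    if ij: "j \<le> I" "i \<le> j" and c: "c > 0" and F: "decays F"
      and eq: "\<And>t. t > 0 \<Longrightarrow> drift lam d I (x t) i j = -c * e i j t + F t" for i j c F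
  proof (rule decay_ode[OF c acE[OF ij] _ F])
    have ee: "e i j = (\<lambda>s. x s i j - xs i j)" by (simp add: e_def fun_eq_iff)
    show "AE t in lborel. t > 0 \<longrightarrow> (e i j has_real_derivative (-c * e i j t + F t)) (at t)"
      using AEd
    proof (rule AE_mp, intro AE_I2 impI)
      fix t :: real
      assume H: "0 < t \<longrightarrow> (\<forall>j\<le>I. \<forall>i\<le>j. ((\<lambda>s. x s i j) has_real_derivative drift lam d I (x t) i j) (at t))"
        and t: "0 < t"
      then have "((\<lambda>s. x s i j) has_real_derivative drift lam d I (x t) i j) (at t)" using ij by blast
      then have "((\<lambda>s. x s i j - xs i j) has_real_derivative drift lam d I (x t) i j) (at t)"
        by (auto intro!: derivative_eq_intros)
      then show "(e i j has_real_derivative (-c * e i j t + F t)) (at t)" using eq[OF t] ee by simp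
    qed
  qed
  have St: "in_S I (x t)" "x t 0 0 > 0" if "t > 0" for t using inS pos00 that by auto
  have rows: "\<forall>j. n \<le> j \<and> j \<le> I \<longrightarrow> decays (e n j)" if n: "1 \<le> n" "n \<le> I" for n
    using n(2)
  proof (induction n rule: inc_induct)
    case base
    show ?case
    proof (intro allI impI)
      fix j assume "I \<le> j \<and> j \<le> I"
      then have j: "j = I" by simp
      have "decays (e I I)"
      proof (rule gen[of I I 1 "\<lambda>t. 0"])
        show "decays (\<lambda>t. 0)" by (rule decays_zero)
        fix t :: real assume t: "t > 0"
        have "xs I I = 0" using I by (simp add: xs_def xstar_def)
        then show "drift lam d I (x t) I I = - 1 * e I I t + 0"
          using drift_II[OF St[OF t] I] by (simp add: e_def)
      qed auto
      then show "decays (e I j)" using j by simp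
    qed
  next
    case (step m)
    have m: "1 \<le> m" "m < I" using step.hyps n(1) by auto
    have off: "decays (e m j)" if mj: "m < j" "j \<le> I" for j
    proof (rule gen[of j m "1 + lam * real d" "e (m+1) j"])
      show "decays (e (m+1) j)" using step.IH mj by simp
      fix t :: real assume t: "t > 0"
      have "(1 + lam * real d) * xs m j = xs (m+1) j"
        using xstar_id[OF mj(1) dpos, of lam] m by (simp add: xs_def)
      then show "drift lam d I (x t) m j = - (1 + lam * real d) * e m j t + e (m + 1) j t"
        using drift_offdiag[OF St[OF t] mj I] m by (simp add: e_def algebra_simps)
    qed (use mj ldpos in auto)
    have diag: "decays (e m m)"
    proof (rule gen[of m m 1 "\<lambda>t. lam * real d * (\<Sum>j\<in>{Suc m..I}. e m j t)"])
      show "decays (\<lambda>t. lam * real d * (\<Sum>j\<in>{Suc m..I}. e m j t))"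
        by (intro decays_scale decays_sum) (use off in auto)
      fix t :: real assume t: "t > 0"
      have "(\<Sum>j\<in>{Suc m..I}. e m j t) = (\<Sum>j\<in>{Suc m..I}. x t m j)"
        using m by (intro sum.cong) (auto simp: e_def xs_def xstar_def)
      moreover have "xs m m = (if m = 1 then lam else 0)" using m by (simp add: xs_def xstar_def)
      ultimately show "drift lam d I (x t) m m = - 1 * e m m t + lam * real d * (\<Sum>j\<in>{Suc m..I}. e m j t)"
        using drift_diag[OF St[OF t] m] by (simp add: e_def)
    qed (use m in auto)
    show ?case
    proof (intro allI impI)
      fix j assume "m \<le> j \<and> j \<le> I"
      then show "decays (e m j)" using off diag by (cases "m = j") auto
    qed
  qed
  have row0: "decays (e 0 j)" if j: "1 \<le> j" "j \<le> I" for j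
  proof (rule gen[of j 0 "lam * real d" "e 1 j"])
    show "decays (e 1 j)" using rows[of 1] j I by simp
    fix t :: real assume t: "t > 0"
    have "(0 + lam * real d) * xs 0 j = xs 1 j"
      using xstar_id[of 0 j d lam] j dpos by (simp add: xs_def)
    then show "drift lam d I (x t) 0 j = - (lam * real d) * e 0 j t + e 1 j t"
      using drift_offdiag[of I "x t" 0 j lam d] St[OF t] j I by (simp add: e_def algebra_simps)
  qed (use j ldpos in auto)
  have rowsI: "decays (e i j)" if "1 \<le> i" "i \<le> j" "j \<le> I" for i j
    using rows[of i] that by auto
  have sum_xs: "(\<Sum>i\<le>I. \<Sum>j=i..I. xs i j) = 1"
  proof -
    have "(\<Sum>i\<le>I. \<Sum>j=i..I. xs i j) = (\<Sum>i\<in>{0,1}. \<Sum>j=i..I. xs i j)"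
      using I by (intro sum.mono_neutral_right) (auto simp: xs_def xstar_def)
    also have "\<dots> = (\<Sum>j=0..I. xs 0 j) + (\<Sum>j=1..I. xs 1 j)" by simp
    also have "(\<Sum>j=0..I. xs 0 j) = (\<Sum>j\<in>{0,1}. xs 0 j)"
      using I by (intro sum.mono_neutral_right) (auto simp: xs_def xstar_def)
    also have "(\<Sum>j=1..I. xs 1 j) = (\<Sum>j\<in>{1}. xs 1 j)"
      using I by (intro sum.mono_neutral_right) (auto simp: xs_def xstar_def)
    finally show ?thesis by (simp add: xs_def xstar_def)
  qed
  define R where "R t = (\<Sum>j\<in>{1..I}. e 0 j t) + (\<Sum>i\<in>{1..I}. \<Sum>j=i..I. e i j t)" for t
  have Rd: "decays R"
  proof -
    have "decays (\<lambda>t. (\<Sum>j\<in>{1..I}. e 0 j t) + (\<Sum>i\<in>{1..I}. \<Sum>j=i..I. e i j t))"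
      by (intro decays_add decays_sum) (auto intro: row0 rowsI)
    then show ?thesis by (simp add: R_def[abs_def])
  qed
  have e00: "e 0 0 t = - R t" if t: "t \<ge> 0" for t
  proof -
    have "(\<Sum>i\<le>I. \<Sum>j=i..I. x t i j) = 1" using inS[OF t] by (simp add: in_S_def)
    then have "(\<Sum>i\<le>I. \<Sum>j=i..I. e i j t) = 0"
      using sum_xs by (simp add: e_def sum_subtractf)
    moreover have "{..I} = insert 0 {1..I}" "{0..I} = insert 0 {1..I}" by auto
    ultimately have "(\<Sum>j=0..I. e 0 j t) + (\<Sum>i\<in>{1..I}. \<Sum>j=i..I. e i j t) = 0"
      by simp
    moreover have "(\<Sum>j=0..I. e 0 j t) = e 0 0 t + (\<Sum>j\<in>{1..I}. e 0 j t)"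
      using \<open>{0..I} = insert 0 {1..I}\<close> by simp
    ultimately show ?thesis unfolding R_def by linarith
  qed
  have d00: "decays (e 0 0)"
  proof (rule decays_le)
    show "decays (\<lambda>t. \<bar>R t\<bar>)" using Rd unfolding decays_def by simp
    show "\<bar>e 0 0 t\<bar> \<le> \<bar>R t\<bar>" if "t \<ge> 0" for t using e00[OF that] by simp
  qed
  have all: "decays (e i j)" if "j \<le> I" "i \<le> j" for i j
  proof (cases "i = 0")
    case True
    then show ?thesis using that d00 row0[of j] by (cases "j = 0") auto
  next
    case False
    then show ?thesis using that rowsI[of i j] by auto
  qed
  define P where "P = (SIGMA j:{..I}. {..j})"
  have Pf: "finite P" unfolding P_def by auto
  have G: "decays (\<lambda>t. \<Sum>p\<in>P. \<bar>e (snd p) (fst p) t\<bar>)"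
  proof (rule decays_sum[OF Pf])
    fix p assume "p \<in> P"
    then have "decays (e (snd p) (fst p))" using all unfolding P_def by auto
    then show "decays (\<lambda>t. \<bar>e (snd p) (fst p) t\<bar>)" unfolding decays_def by simp
  qed
  have dist_le: "\<bar>state_dist I (x t) (xstar lam d)\<bar> \<le> (\<Sum>p\<in>P. \<bar>e (snd p) (fst p) t\<bar>)" for t
  proof -
    have "state_dist I (x t) (xstar lam d) = sqrt (\<Sum>p\<in>P. (e (snd p) (fst p) t)^2)"
      unfolding state_dist_def P_def e_def xs_def by (simp add: sum.Sigma split_def)
    also have "\<dots> = L2_set (\<lambda>p. e (snd p) (fst p) t) P" by (simp add: L2_set_def)
    also have "\<dots> \<le> (\<Sum>p\<in>P. \<bar>e (snd p) (fst p) t\<bar>)" by (rule L2_set_le_sum_abs)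
    finally have "state_dist I (x t) (xstar lam d) \<le> (\<Sum>p\<in>P. \<bar>e (snd p) (fst p) t\<bar>)" .
    moreover have "state_dist I (x t) (xstar lam d) \<ge> 0" by (simp add: state_dist_def sum_nonneg)
    ultimately show ?thesis by simp
  qed
  have "decays (\<lambda>t. state_dist I (x t) (xstar lam d))"
    by (rule decays_le[OF G dist_le])
  then obtain \<alpha> \<beta> where "\<alpha> > 0" "\<beta> > 0" "\<forall>t\<ge>0. \<bar>state_dist I (x t) (xstar lam d)\<bar> \<le> \<alpha> * exp (- \<beta> * t)"
    unfolding decays_def by blast
  then show ?thesis by (meson abs_ge_self order_trans)
qed

end
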